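(* Let $p\in(0,1)$ and $x\geq 1$. Let $(\xi_n)_{n\geq1}$ be i.i.d. random variables with $\mathbf{P}(\xi_1=1)=p=1-\mathbf{P}(\xi_1=-1)$. Set $W_0:=x$, $B_1:=1$ and, for $n\geq 1$, $W_n:=W_{n-1}+\xi_nB_n$ and $B_{n+1}:=B_n2^{\xi_n}$. Let $f(x,p):=\mathbf{P}(W_n\leq 0 \text{ for some } n)$. Then $f(x,p)<1$ if and only if $x>2$ and $p<1/2$.
   Context: $W_n$ is the wealth of a gambler after $n$ rounds (initial fortune $x$) and $B_n$ is the bet at round $n$: the bet is doubled after each win ($\xi_n=1$) and halved after each loss ($\xi_n=-1$). $f(x,p)$ is the ruin probability. *)

theory Defs
  imports "HOL-Probability.Probability"
begin

text \<open>Bets: B_1 = 1, B_(n+1) = B_n * 2 powr xi_n (index 0 is unused).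
  The sequence xi is indexed from 1; xi 0 is ignored.\<close>
fun bet :: "(nat \<Rightarrow> real) \<Rightarrow> nat \<Rightarrow> real" where
  "bet e 0 = 1"
| "bet e (Suc 0) = 1"
| "bet e (Suc (Suc n)) = bet e (Suc n) * 2 powr e (Suc n)"

fun wealth :: "real \<Rightarrow> (nat \<Rightarrow> real) \<Rightarrow> nat \<Rightarrow> real" where
  "wealth x e 0 = x"
| "wealth x e (Suc n) = wealth x e n + e (Suc n) * bet e (Suc n)"

end

theory Submission
  imports Defs
begin


fun QN :: "real \<Rightarrow> nat \<Rightarrow> real \<Rightarrow> real" where
  "QN p 0 R = (if R \<le> 0 then 1 else 0)"
| "QN p (Suc N) R = (if R \<le> 0 then 1 else p * QN p N ((R+1)/2) + (1-p) * QN p N (2*R-2))"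

declare QN.simps[simp del]
lemmas QN0 = QN.simps(1)
lemmas QNS = QN.simps(2)

locale prm =
  fixes p :: real
  assumes p0: "0 < p" and p1: "p < 1"
begin

lemma QN_bounds: "0 \<le> QN p N R \<and> QN p N R \<le> 1"
proof (induction N arbitrary: R)
  case 0 then show ?case by (simp add: QN0)
next
  case (Suc N)
  have a: "0 \<le> QN p N ((R+1)/2)" "QN p N ((R+1)/2) \<le> 1" "0 \<le> QN p N (2*R-2)" "QN p N (2*R-2) \<le> 1"
    using Suc by auto
  have "p * QN p N ((R+1)/2) + (1-p) * QN p N (2*R-2) \<le> p * 1 + (1-p) * 1"
    by (intro add_mono mult_left_mono) (use a p0 p1 in auto)
  moreover have "0 \<le> p * QN p N ((R+1)/2) + (1-p) * QN p N (2*R-2)"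
    using a p0 p1 by auto
  ultimately show ?case by (auto simp: QNS)
qed

lemma QN_le0: "R \<le> 0 \<Longrightarrow> QN p N R = 1"
  by (cases N) (auto simp: QN0 QNS)

lemma QN_Suc_mono: "QN p N R \<le> QN p (Suc N) R"
proof (induction N arbitrary: R)
  case 0 then show ?case using QN_bounds[of "Suc 0" R] by (auto simp: QN0 QN_le0)
next
  case (Suc N)
  show ?case
  proof (cases "R \<le> 0")
    case False
    have "p * QN p N ((R+1)/2) \<le> p * QN p (Suc N) ((R+1)/2)"
      using Suc p0 by (intro mult_left_mono) auto
    moreover have "(1-p) * QN p N (2*R-2) \<le> (1-p) * QN p (Suc N) (2*R-2)"
      using Suc p1 by (intro mult_left_mono) auto
    ultimately show ?thesis using False by (simp add: QNS[of _ "Suc N"] QNS[of _ N])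
  qed (simp add: QN_le0)
qed

lemma QN_mono: "N \<le> N' \<Longrightarrow> QN p N R \<le> QN p N' R"
proof (induction N' rule: dec_induct)
  case (step n) then show ?case using QN_Suc_mono[of n R] by linarith
qed simp

lemma QN_anti: "R \<le> R' \<Longrightarrow> QN p N R' \<le> QN p N R"
proof (induction N arbitrary: R R')
  case 0 then show ?case by (auto simp: QN0)
next
  case (Suc N)
  show ?case
  proof (cases "R \<le> 0")
    case True then show ?thesis using QN_bounds[of "Suc N" R'] by (simp add: QN_le0)
  next
    case False
    with Suc.prems have R': "\<not> R' \<le> 0" by auto
    have "p * QN p N ((R'+1)/2) \<le> p * QN p N ((R+1)/2)"
      using Suc p0 by (intro mult_left_mono) auto
    moreover have "(1-p) * QN p N (2*R'-2) \<le> (1-p) * QN p N (2*R-2)"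
      using Suc p1 by (intro mult_left_mono) auto
    ultimately show ?thesis using False R' by (simp add: QNS)
  qed
qed

lemma QN_c: "0 \<le> 1 - p*(1-p)^2" "1 - p*(1-p)^2 < 1"
proof -
  have "(1-p)^2 \<le> 1" using p0 p1 by (intro power_le_one) auto
  hence "p*(1-p)^2 \<le> 1*1" using p0 p1 by (intro mult_mono) auto
  thus "0 \<le> 1 - p*(1-p)^2" by simp
  have "0 < p*(1-p)^2" using p0 p1 by simp
  thus "1 - p*(1-p)^2 < 1" by simp
qed

lemma QN_low: "R \<le> 2 \<Longrightarrow> 1 - (1 - p*(1-p)^2)^k \<le> QN p (3*k) R"
proof (induction k arbitrary: R)
  case 0 then show ?case using QN_bounds[of 0 R] by simp
next
  case (Suc k)
  define m where "m = 1 - (1 - p*(1-p)^2)^k"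
  define q where "q = 1 - p"
  have q0: "0 < q" and q1: "q < 1" using p0 p1 by (auto simp: q_def)
  have m1: "m \<le> 1" unfolding m_def using QN_c by simp
  have m1': "1 - (1 - p*(1-p)^2)^Suc k \<le> 1" using QN_c by simp
  have IH: "\<And>R j. R \<le> 2 \<Longrightarrow> m \<le> QN p (3*k + j) R"
  proof -
    fix R j assume "R \<le> (2::real)"
    hence "m \<le> QN p (3*k) R" using Suc.IH unfolding m_def by blast
    moreover have "QN p (3*k) R \<le> QN p (3*k+j) R" by (rule QN_mono) simp
    ultimately show "m \<le> QN p (3*k + j) R" by linarith
  qed
  show ?case
  proof (cases "R \<le> 0")
    case True then show ?thesis using QN_le0[OF True, of "3 * Suc k"] m1' by linarith
  next
    case False
    define R1 where "R1 = (R+1)/2"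
    define R2 where "R2 = 2*R1 - 2"
    have R1pos: "\<not> R1 \<le> 0" using False by (simp add: R1_def)
    have e1: "QN p (3*Suc k) R = p * QN p (3*k+2) R1 + q * QN p (3*k+2) (2*R-2)"
    proof -
      have "3 * Suc k = Suc (3*k+2)" by simp
      thus ?thesis using False by (simp only: QNS R1_def q_def) simp
    qed
    have e2: "QN p (3*k+2) R1 = p * QN p (3*k+1) ((R1+1)/2) + q * QN p (3*k+1) R2"
    proof -
      have "3*k+2 = Suc (3*k+1)" by simp
      thus ?thesis using R1pos by (simp only: QNS R2_def q_def) simp
    qed
    have e3: "p * m + q \<le> QN p (3*k+1) R2"
    proof (cases "R2 \<le> 0")
      case True
      have "p * m \<le> p * 1" using m1 p0 by (intro mult_left_mono) auto
      then show ?thesis using QN_le0[OF True, of "3*k+1"] by (simp add: q_def)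
    next
      case F: False
      have "2*R2 - 2 \<le> 0" using Suc.prems by (simp add: R2_def R1_def)
      hence "QN p (3*k) (2*R2-2) = 1" by (rule QN_le0)
      moreover have "m \<le> QN p (3*k+0) ((R2+1)/2)" using Suc.prems
        by (intro IH) (simp add: R2_def R1_def)
      moreover have "QN p (3*k+1) R2 = p * QN p (3*k) ((R2+1)/2) + q * QN p (3*k) (2*R2-2)"
      proof -
        have "3*k+1 = Suc (3*k)" by simp
        thus ?thesis using F by (simp only: QNS q_def) simp
      qed
      ultimately show ?thesis using p0 by simp
    qed
    have a1: "m \<le> QN p (3*k+1) ((R1+1)/2)" using Suc.prems by (intro IH) (simp add: R1_def)
    have a2: "m \<le> QN p (3*k+2) (2*R-2)" using Suc.prems by (intro IH) simp
    have "p * m + q * (p * m + q) \<le> QN p (3*k+2) R1"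
      unfolding e2 using a1 e3 p0 q0
      by (intro add_mono mult_left_mono) auto
    hence "p * (p * m + q * (p * m + q)) + q * m \<le> QN p (3*Suc k) R"
      unfolding e1 using a2 p0 q0 by (intro add_mono mult_left_mono) auto
    moreover have "p * (p * m + q * (p * m + q)) + q * m = 1 - (1 - p*(1-p)^2)^Suc k"
      unfolding m_def q_def by (simp add: algebra_simps power2_eq_square)
    ultimately show ?thesis by simp
  qed
qed

definition Qf :: "real \<Rightarrow> real" where "Qf R = (SUP N. QN p N R)"

lemma Q_bdd: "bdd_above (range (\<lambda>N. QN p N R))"
  using QN_bounds by (intro bdd_aboveI[of _ 1]) auto

lemma Q_lim: "(\<lambda>N. QN p N R) \<longlonglongrightarrow> Qf R"
  unfolding Qf_def by (rule LIMSEQ_incseq_SUP[OF Q_bdd]) (simp add: incseq_SucI QN_Suc_mono)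

lemma Q_ge: "QN p N R \<le> Qf R"
  unfolding Qf_def by (rule cSUP_upper[OF _ Q_bdd]) simp

lemma Q_le: "(\<And>N. QN p N R \<le> b) \<Longrightarrow> Qf R \<le> b"
  unfolding Qf_def by (rule cSUP_least) auto

lemma Q_bounds: "0 \<le> Qf R" "Qf R \<le> 1"
  using Q_ge[of 0 R] QN_bounds[of 0 R] apply linarith
  using Q_le QN_bounds by blast

lemma Q_anti: "R \<le> R' \<Longrightarrow> Qf R' \<le> Qf R"
  by (rule Q_le) (meson QN_anti Q_ge order_trans)

lemma Q_eq: "0 < R \<Longrightarrow> Qf R = p * Qf ((R+1)/2) + (1-p) * Qf (2*R-2)"
proof -
  assume R: "0 < R"
  have "(\<lambda>N. QN p (Suc N) R) \<longlonglongrightarrow> Qf R" using Q_lim by (rule LIMSEQ_Suc)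
  moreover have "(\<lambda>N. QN p (Suc N) R) = (\<lambda>N. p * QN p N ((R+1)/2) + (1-p) * QN p N (2*R-2))"
    using R by (simp add: QNS)
  moreover have "(\<lambda>N. p * QN p N ((R+1)/2) + (1-p) * QN p N (2*R-2)) \<longlonglongrightarrow> p * Qf ((R+1)/2) + (1-p) * Qf (2*R-2)"
    by (intro tendsto_intros Q_lim)
  ultimately show ?thesis using LIMSEQ_unique by metis
qed

lemma Q_low: "R \<le> 2 \<Longrightarrow> Qf R = 1"
proof -
  assume R: "R \<le> 2"
  define c where "c = 1 - p*(1-p)^2"
  have "(\<lambda>k. 1 - c^k) \<longlonglongrightarrow> 1 - 0"
    using QN_c unfolding c_def by (intro tendsto_intros) auto
  hence lim: "(\<lambda>k. 1 - c^k) \<longlonglongrightarrow> 1" by simp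
  have "\<forall>k. 1 - c^k \<le> Qf R"
    using QN_low[OF R] Q_ge unfolding c_def by (meson order_trans)
  hence "1 \<le> Qf R"
    using LIMSEQ_le_const2[OF lim, of "Qf R"] by blast
  thus ?thesis using Q_bounds(2)[of R] by linarith
qed

lemma Q_half:
  assumes ph: "1/2 \<le> p"
  shows "Qf R = 1"
proof -
  define q where "q = 1 - p"
  have q0: "0 < q" and qp: "q \<le> p" using p1 ph by (auto simp: q_def)
  define F where "F n = Qf (2 + 2^n)" for n :: nat
  have F0: "p + q * F 1 \<le> F 0"
  proof -
    have "Qf 3 = p * Qf 2 + q * Qf 4" using Q_eq[of 3] by (simp add: q_def)
    thus ?thesis using Q_low[of 2] by (simp add: F_def)
  qed
  have FS: "p * F n + q * F (Suc (Suc n)) \<le> F (Suc n)" for n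
  proof -
    have "Qf (2 + 2^Suc n) = p * Qf ((2 + 2^Suc n + 1)/2) + q * Qf (2*(2 + 2^Suc n) - 2)"
      by (rule Q_eq[unfolded q_def[symmetric]]) (simp add: add_pos_pos)
    moreover have "2*(2 + 2^Suc n) - 2 = (2 + 2^Suc (Suc n) :: real)" by simp
    moreover have "F n \<le> Qf ((2 + 2^Suc n + 1)/2)"
      unfolding F_def by (rule Q_anti) simp
    ultimately show ?thesis unfolding F_def using p0 by (simp add: mult_left_mono)
  qed
  have Fb: "0 \<le> F n" "F n \<le> 1" for n using Q_bounds by (auto simp: F_def)
  have Fa: "F (Suc n) \<le> F n" for n unfolding F_def by (rule Q_anti) simp
  define e where "e n = (if n = 0 then 1 - F 0 else F (n-1) - F n)" for n
  have e0: "0 \<le> e n" for n using Fb Fa by (cases n) (auto simp: e_def)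
  have emono: "e n \<le> e (Suc n)" for n
  proof -
    have "q * e n \<le> p * e n" using e0[of n] qp by (intro mult_right_mono) auto
    also have "p * e n \<le> q * e (Suc n)"
    proof (cases n)
      case 0 then show ?thesis using F0 by (simp add: e_def q_def algebra_simps)
    next
      case (Suc m) then show ?thesis using FS[of m] by (simp add: e_def q_def algebra_simps)
    qed
    finally show ?thesis using q0 by simp
  qed
  have Fsum: "F n = 1 - (\<Sum>i\<le>n. e i)" for n
    by (induction n) (auto simp: e_def)
  have ez: "e j = 0" for j
  proof (rule ccontr)
    assume "e j \<noteq> 0"
    hence ej: "0 < e j" using e0[of j] by simp
    obtain N :: nat where N: "1 < real N * e j" using reals_Archimedean3[OF ej] by blast
    have "\<forall>i\<in>{j..<j+N}. e j \<le> e i" using emono by (auto intro: lift_Suc_mono_le)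
    hence "real (card {j..<j+N}) * e j \<le> (\<Sum>i\<in>{j..<j+N}. e i)"
      using sum_bounded_below[of "{j..<j+N}" "e j" e] by auto
    also have "\<dots> \<le> (\<Sum>i\<le>j+N. e i)" using e0 by (intro sum_mono2) auto
    finally have "real N * e j \<le> (\<Sum>i\<le>j+N. e i)" by simp
    moreover have "(\<Sum>i\<le>j+N. e i) \<le> 1" using Fsum[of "j+N"] Fb[of "j+N"] by simp
    ultimately show False using N by simp
  qed
  have F1: "F n = 1" for n using Fsum[of n] ez by simp
  show ?thesis
  proof (cases "R \<le> 2")
    case True then show ?thesis by (rule Q_low)
  next
    case False
    obtain n where "R - 2 < 2^n" using real_arch_pow[of 2 "R-2"] by auto
    hence "F n \<le> Qf R" unfolding F_def by (intro Q_anti) simp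
    thus ?thesis using F1[of n] Q_bounds[of R] by simp
  qed
qed

lemma QN_losses:
  "0 < u \<Longrightarrow> QN p (N+K) (2+u) \<le> 1 - (1-p)^K + (1-p)^K * QN p N (2 + 2^K*u)"
proof (induction K arbitrary: u)
  case 0 then show ?case by simp
next
  case (Suc K)
  define q where "q = 1 - p"
  have q0: "0 < q" using p1 by (simp add: q_def)
  have "QN p (N + Suc K) (2+u) = p * QN p (N+K) ((2+u+1)/2) + q * QN p (N+K) (2*(2+u)-2)"
    using Suc.prems by (simp add: QNS q_def)
  also have "2*(2+u)-2 = 2 + 2*u" by simp
  also have "p * QN p (N+K) ((2+u+1)/2) \<le> p * 1" using QN_bounds p0 by (intro mult_left_mono) auto
  also have "q * QN p (N+K) (2+2*u) \<le> q * (1 - q^K + q^K * QN p N (2 + 2^K*(2*u)))"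
    using Suc.IH[of "2*u"] Suc.prems q0 by (intro mult_left_mono) (auto simp: q_def)
  finally show ?case unfolding q_def[symmetric] using p0 by (simp add: algebra_simps q_def)
qed

end

context prm begin
lemma Q_small:
  assumes ph: "p < 1/2" and x: "2 < x"
  shows "Qf x < 1"
proof -
  define q where "q = 1 - p"
  have q0: "0 < q" and pq: "p < q" using p1 ph by (auto simp: q_def)
  define a where "a = (2 + 2 powr (q/p))/2"
  have "2 powr 1 < 2 powr (q/p)" using pq p0 by (intro powr_less_mono) auto
  hence a2: "2 < a" and aq: "a < 2 powr (q/p)" by (auto simp: a_def)
  have "ln a < ln (2 powr (q/p))" using a2 aq by (subst ln_less_cancel_iff) auto
  moreover have "ln (2 powr (q/p)) = q/p * ln 2" by (simp add: ln_powr)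
  ultimately have "ln a < q/p * ln 2" by linarith
  hence lna: "p * ln a < q * ln 2" using p0 by (simp add: field_simps)
  define f where "f h = p * exp (h * ln a) + q * exp (- h * ln 2)" for h
  have der: "DERIV f 0 :> p * ln a - q * ln 2" unfolding f_def
    by (auto intro!: derivative_eq_intros)
  have "p * ln a - q * ln 2 < 0" using lna by simp
  from DERIV_neg_dec_right[OF der this] obtain d1 where d1: "d1 > 0" "\<forall>h>0. h < d1 \<longrightarrow> f (0+h) < f 0"
    by blast
  define g where "g h = exp (h * (- ln a)) - q * exp (h * (- (ln 2 + ln a)))" for h
  have dexp: "DERIV (\<lambda>h. exp (h * c)) 0 :> c" for c :: real
    by (auto intro!: derivative_eq_intros)
  have derg: "DERIV g 0 :> (- ln a) - q * (- (ln 2 + ln a))" unfolding g_def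
    by (intro DERIV_diff DERIV_cmult dexp)
  have posg: "(- ln a) - q * (- (ln 2 + ln a)) > 0" using lna by (simp add: q_def algebra_simps)
  from DERIV_pos_inc_right[OF derg posg] obtain d2 where d2: "d2 > 0" "\<forall>h>0. h < d2 \<longrightarrow> g 0 < g (0+h)"
    by blast
  define s where "s = min d1 d2 / 2"
  have s0: "0 < s" and sd: "s < d1" "s < d2" using d1 d2 by (auto simp: s_def)
  have as: "a powr s = exp (s * ln a)" "a powr (-s) = exp (- s * ln a)" using a2 by (simp_all add: powr_def)
  have ts: "2 powr (-s) = exp (- s * ln 2)" by (simp add: powr_def)
  have "f (0+s) < f 0" using d1(2) s0 sd by blast
  moreover have "f 0 = 1" by (simp add: f_def q_def)
  ultimately have fs: "p * a powr s + q * 2 powr (-s) < 1" unfolding as ts by (simp add: f_def)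
  have "p < a powr (-s) * (1 - q * 2 powr (-s))"
  proof -
    have "g (0+s) > g 0" using d2(2) s0 sd by blast
    hence "g 0 < g s" by simp
    moreover have "g 0 = p" by (simp add: g_def q_def)
    moreover have "g s = a powr (-s) * (1 - q * 2 powr (-s))"
    proof -
      have "s * (- (ln 2 + ln a)) = (- s * ln a) + (- s * ln 2)" by (simp add: algebra_simps)
      hence "exp (s * (- (ln 2 + ln a))) = exp (- s * ln a) * exp (- s * ln 2)" by (simp only: exp_add)
      moreover have gs_eq: "g s = exp (- s * ln a) - q * exp (s * (- (ln 2 + ln a)))" by (simp add: g_def)
      ultimately show ?thesis unfolding as ts by (simp add: algebra_simps)
    qed
    ultimately show ?thesis by simp
  qed
  hence gs: "p < a powr (-s) * (1 - q * 2 powr (-s))" .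
  have pos1: "0 < 1 - q * 2 powr (-s)"
  proof (rule ccontr)
    assume "\<not> 0 < 1 - q * 2 powr (-s)"
    hence "a powr (-s) * (1 - q * 2 powr (-s)) \<le> 0"
      using mult_nonneg_nonpos[of "a powr -s" "1 - q*2 powr -s"] by simp
    thus False using gs p0 by linarith
  qed
  define C where "C = 1 / (a - 2)"
  have C0: "0 < C" using a2 by (simp add: C_def)
  have aC: "(a-2) * C = 1" using a2 by (simp add: C_def)
  define \<psi> where "\<psi> R = (if R - 2 \<le> C then 1 else (C/(R-2)) powr s)" for R
  have psi: "QN p N R \<le> \<psi> R" for N R
  proof (induction N arbitrary: R)
    case 0 then show ?case using C0 by (auto simp: QN0 \<psi>_def)
  next
    case (Suc N)
    show ?case
    proof (cases "R - 2 \<le> C")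
      case True then show ?thesis using QN_bounds[of "Suc N" R] by (simp add: \<psi>_def)
    next
      case False
      define u where "u = R - 2"
      have u: "C < u" "0 < u" "\<not> R \<le> 0" using False C0 by (auto simp: u_def)
      define t where "t = (C/u) powr s"
      have t0: "0 < t" using C0 u by (simp add: t_def)
      have psiR: "\<psi> R = t" using False by (simp add: \<psi>_def t_def u_def)
      have eq: "QN p (Suc N) R = p * QN p N ((R+1)/2) + q * QN p N (2*R-2)"
        using u by (simp add: QNS q_def)
      have h1: "QN p N (2*R-2) \<le> t * 2 powr (-s)"
      proof -
        have ps: "\<psi> (2*R-2) = (C/(2*u)) powr s" using u by (simp add: \<psi>_def u_def)
        have e: "C/u = (C/(2*u)) * 2" using u by simp
        have "t = ((C/(2*u)) * 2) powr s" unfolding t_def by (simp only: e)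
        also have "\<dots> = (C/(2*u)) powr s * 2 powr s" using C0 u by (intro powr_mult)
        finally have t2: "t = (C/(2*u)) powr s * 2 powr s" .
        have "2 powr (-s) * 2 powr s = 1" by (simp add: powr_add[symmetric])
        hence "(C/(2*u)) powr s = t * 2 powr (-s)" unfolding t2 by (metis mult.assoc mult.commute mult_1)
        thus ?thesis using Suc.IH[of "2*R-2"] ps by simp
      qed
      show ?thesis
      proof (cases "(u-1)/2 \<le> C")
        case True
        have "1/a \<le> C/u"
        proof -
          have "u \<le> a * C" using True aC by (simp add: algebra_simps)
          thus ?thesis using a2 C0 u by (simp add: field_simps)
        qed
        hence "(1/a) powr s \<le> t" unfolding t_def using a2 s0 by (intro powr_mono2) auto
        hence ta: "a powr (-s) \<le> t" by (simp add: powr_minus_divide powr_divide)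
        have "p \<le> t * (1 - q * 2 powr (-s))"
          using gs mult_right_mono[OF ta, of "1 - q * 2 powr (-s)"] pos1 by linarith
        hence "p * 1 + q * (t * 2 powr (-s)) \<le> t" by (simp add: algebra_simps)
        moreover have "p * QN p N ((R+1)/2) + q * QN p N (2*R-2) \<le> p * 1 + q * (t * 2 powr (-s))"
          using QN_bounds h1 p0 q0 by (intro add_mono mult_left_mono) auto
        ultimately show ?thesis using eq psiR by simp
      next
        case False
        have r: "(R+1)/2 - 2 = (u-1)/2" by (simp add: u_def field_simps)
        have "C/((u-1)/2) \<le> C/u * a"
        proof -
          have "a * C < u" using False aC by (simp add: algebra_simps)
          hence "(a-2) * (a*C) < (a-2) * u" using a2 by (intro mult_strict_left_mono) auto
          moreover have "(a-2)*(a*C) = a"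
          proof -
            have "(a-2)*(a*C) = a*((a-2)*C)" by (simp only: mult.left_commute)
            thus ?thesis using aC by simp
          qed
          ultimately have "a < (a-2)*u" by simp
          hence "2*u \<le> a*(u-1)" by (simp add: algebra_simps)
          hence "C*(2*u) \<le> C*(a*(u-1))" using C0 by (intro mult_left_mono) auto
          thus ?thesis using C0 u False by (simp add: field_simps)
        qed
        hence "(C/((u-1)/2)) powr s \<le> (C/u * a) powr s" using C0 u False s0
          by (intro powr_mono2) auto
        also have "\<dots> = t * a powr s" unfolding t_def by (rule powr_mult)
        finally have h2a: "(C/((u-1)/2)) powr s \<le> t * a powr s" .
        have "\<psi> ((R+1)/2) = (C/((u-1)/2)) powr s" using False unfolding \<psi>_def r by simp
        hence h2: "QN p N ((R+1)/2) \<le> t * a powr s"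
          using Suc.IH[of "(R+1)/2"] h2a by simp
        have "p * QN p N ((R+1)/2) + q * QN p N (2*R-2) \<le> p * (t * a powr s) + q * (t * 2 powr (-s))"
          using h1 h2 p0 q0 by (intro add_mono mult_left_mono) auto
        also have "\<dots> = t * (p * a powr s + q * 2 powr (-s))" by (simp add: algebra_simps)
        also have "\<dots> \<le> t * 1" using fs t0 by (intro mult_left_mono) auto
        finally show ?thesis using eq psiR by simp
      qed
    qed
  qed
  obtain K where K: "C/(x-2) < 2^K" using real_arch_pow[of 2 "C/(x-2)"] by auto
  define v where "v = 2^K * (x-2)"
  have v: "C < v" using K x by (simp add: v_def field_simps)
  have psiv: "\<psi> (2+v) < 1"
  proof -
    have "(C/v) powr s < 1 powr s" using C0 v s0 by (intro powr_less_mono2) auto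
    thus ?thesis using v by (simp add: \<psi>_def)
  qed
  define \<beta> where "\<beta> = 1 - q^K + q^K * \<psi> (2+v)"
  have "Qf x \<le> \<beta>"
  proof (rule Q_le)
    fix N
    have "QN p N x \<le> QN p (N+K) x" by (rule QN_mono) simp
    also have "\<dots> = QN p (N+K) (2 + (x-2))" by simp
    also have "\<dots> \<le> 1 - q^K + q^K * QN p N (2 + 2^K*(x-2))"
      using QN_losses[of "x-2" N K] x by (simp add: q_def)
    also have "\<dots> \<le> \<beta>" unfolding \<beta>_def v_def using psi q0 by (intro add_mono mult_left_mono) auto
    finally show "QN p N x \<le> \<beta>" .
  qed
  moreover have "\<beta> < 1" unfolding \<beta>_def using psiv q0 by (simp add: algebra_simps)
  ultimately show ?thesis by simp
qed

end



definition stp :: "real \<Rightarrow> real \<Rightarrow> real" where "stp R e = (R + e) / 2 powr e"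

fun ruinL :: "real \<Rightarrow> real list \<Rightarrow> bool" where
  "ruinL R [] = (R \<le> 0)"
| "ruinL R (e#s) = (R \<le> 0 \<or> ruinL (stp R e) s)"

definition wt :: "real \<Rightarrow> real \<Rightarrow> real" where "wt p e = (if e = 1 then p else 1 - p)"

definition LS :: "nat \<Rightarrow> real list set" where "LS N = {s. set s \<subseteq> {1,-1} \<and> length s = N}"

lemma LS_Suc: "LS (Suc N) = (\<lambda>(xs, n). n#xs) ` (LS N \<times> {1,-1})"
  unfolding LS_def by (rule lists_length_Suc_eq)

lemma LS_finite: "finite (LS N)"
  unfolding LS_def by (rule finite_lists_length_eq) simp

lemma inj_Cons2: "inj_on (\<lambda>(xs, n). n#xs) X"
  by (auto simp: inj_on_def)

lemma sum_LS_Suc: "(\<Sum>s\<in>LS (Suc N). f s) = (\<Sum>t\<in>LS N. f (1#t) + f ((-1)#t))"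
proof -
  have "(\<Sum>s\<in>LS (Suc N). f s) = (\<Sum>(t,e)\<in>LS N \<times> {1,-1}. f (e#t))"
    unfolding LS_Suc by (subst sum.reindex[OF inj_Cons2]) (simp add: case_prod_unfold)
  also have "\<dots> = (\<Sum>t\<in>LS N. \<Sum>e\<in>{1,-1}. f (e#t))"
    by (rule sum.cartesian_product[symmetric])
  also have "\<dots> = (\<Sum>t\<in>LS N. f (1#t) + f ((-1)#t))" by simp
  finally show ?thesis .
qed

lemma stp1: "stp R 1 = (R+1)/2" by (simp add: stp_def)
lemma stpm1: "stp R (-1) = 2*R - 2"
  by (simp add: stp_def powr_minus_divide field_simps)

lemma LS0: "LS 0 = {[]}" by (auto simp: LS_def)

lemma sum_w: "(\<Sum>s\<in>LS N. prod_list (map (wt p) s)) = 1"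
proof (induction N)
  case 0 then show ?case by (simp add: LS0)
next
  case (Suc N)
  have "(\<Sum>s\<in>LS (Suc N). prod_list (map (wt p) s))
      = (\<Sum>t\<in>LS N. p * prod_list (map (wt p) t) + (1-p) * prod_list (map (wt p) t))"
    unfolding sum_LS_Suc by (simp add: wt_def)
  also have "\<dots> = (\<Sum>t\<in>LS N. prod_list (map (wt p) t))"
    by (intro sum.cong) (simp_all add: algebra_simps)
  finally show ?case using Suc.IH by simp
qed

lemma comb: "(\<Sum>s\<in>LS N. prod_list (map (wt p) s) * (if ruinL R s then 1 else 0)) = QN p N R"
proof (induction N arbitrary: R)
  case 0 then show ?case by (simp add: LS0 QN0)
next
  case (Suc N)
  show ?case
  proof (cases "R \<le> 0")
    case True
    have "(\<Sum>s\<in>LS (Suc N). prod_list (map (wt p) s) * (if ruinL R s then 1 else 0))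
        = (\<Sum>s\<in>LS (Suc N). prod_list (map (wt p) s))"
      using True by (intro sum.cong) (auto simp: LS_def elim!: ruinL.elims)
    also have "\<dots> = 1" by (rule sum_w)
    finally show ?thesis using True by (simp add: QNS)
  next
    case False
    have "(\<Sum>s\<in>LS (Suc N). prod_list (map (wt p) s) * (if ruinL R s then 1 else 0))
       = (\<Sum>t\<in>LS N. p * (prod_list (map (wt p) t) * (if ruinL ((R+1)/2) t then 1 else 0))
                    + (1-p) * (prod_list (map (wt p) t) * (if ruinL (2*R-2) t then 1 else 0)))"
      unfolding sum_LS_Suc using False by (simp add: wt_def stp1 stpm1 mult.assoc)
    also have "\<dots> = p * QN p N ((R+1)/2) + (1-p) * QN p N (2*R-2)"
      by (simp add: sum.distrib sum_distrib_left[symmetric] Suc.IH)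
    finally show ?thesis using False by (simp add: QNS)
  qed
qed

fun itr :: "real \<Rightarrow> (nat \<Rightarrow> real) \<Rightarrow> nat \<Rightarrow> nat \<Rightarrow> real" where
  "itr R e k 0 = R"
| "itr R e k (Suc n) = stp (itr R e k n) (e (k+n))"

lemma itr_shift: "itr R e k (Suc n) = itr (stp R (e k)) e (Suc k) n"
  by (induction n) simp_all

lemma ruinL_itr: "ruinL R (map e [k..<k+N]) \<longleftrightarrow> (\<exists>n\<le>N. itr R e k n \<le> 0)"
proof (induction N arbitrary: R k)
  case 0 then show ?case by simp
next
  case (Suc N)
  have L: "[k..<k+Suc N] = k # [Suc k..<Suc k+N]" by (simp add: upt_conv_Cons del: upt_Suc)
  have IH: "ruinL (stp R (e k)) (map e [Suc k..<Suc k+N]) \<longleftrightarrow> (\<exists>n\<le>N. itr (stp R (e k)) e (Suc k) n \<le> 0)"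
    by (rule Suc.IH)
  have "ruinL R (map e [k..<k+Suc N]) \<longleftrightarrow> R \<le> 0 \<or> ruinL (stp R (e k)) (map e [Suc k..<Suc k+N])"
    unfolding L by simp
  hence "ruinL R (map e [k..<k+Suc N]) \<longleftrightarrow> R \<le> 0 \<or> (\<exists>n\<le>N. itr R e k (Suc n) \<le> 0)"
    unfolding IH by (simp only: itr_shift)
  also have "\<dots> \<longleftrightarrow> (\<exists>n\<le>Suc N. itr R e k n \<le> 0)"
  proof
    assume "R \<le> 0 \<or> (\<exists>n\<le>N. itr R e k (Suc n) \<le> 0)"
    thus "\<exists>n\<le>Suc N. itr R e k n \<le> 0"
      by (metis Suc_le_mono itr.simps(1) le0)
  next
    assume "\<exists>n\<le>Suc N. itr R e k n \<le> 0"
    then obtain n where n: "n \<le> Suc N" "itr R e k n \<le> 0" by blast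
    thus "R \<le> 0 \<or> (\<exists>n\<le>N. itr R e k (Suc n) \<le> 0)"
      by (cases n) auto
  qed
  finally show ?case .
qed

lemma bet_pos: "0 < bet e n"
  by (induction e n rule: bet.induct) simp_all

lemma wealth_itr: "wealth x e n / bet e (Suc n) = itr x e 1 n"
proof (induction n)
  case 0 then show ?case by simp
next
  case (Suc n)
  have B: "0 < bet e (Suc n)" by (rule bet_pos)
  have "wealth x e (Suc n) / bet e (Suc (Suc n))
      = (wealth x e n + e (Suc n) * bet e (Suc n)) / (bet e (Suc n) * 2 powr e (Suc n))" by simp
  also have "\<dots> = (wealth x e n / bet e (Suc n) + e (Suc n)) / 2 powr e (Suc n)"
    using B by (simp add: field_simps)
  finally show ?case using Suc.IH by (simp add: stp_def)
qed

lemma event_eq: "(\<exists>n\<le>N. wealth x e n \<le> 0) \<longleftrightarrow> ruinL x (map e [1..<1+N])"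
proof -
  have "wealth x e n \<le> 0 \<longleftrightarrow> itr x e 1 n \<le> 0" for n
    using bet_pos[of e "Suc n"] wealth_itr[of x e n, symmetric] by (simp add: divide_le_0_iff)
  thus ?thesis using ruinL_itr[of x e 1 N] by (simp del: upt_Suc)
qed

lemma prod_list_nth: "prod_list (map f s) = (\<Prod>i<length s. f (s!i))"
proof (induction s)
  case (Cons a s)
  have "(\<Prod>i<length (a#s). f ((a#s)!i)) = f ((a#s)!0) * (\<Prod>i<length s. f ((a#s)!(Suc i)))"
    by (simp only: length_Cons prod.lessThan_Suc_shift)
  thus ?case using Cons by simp
qed simp

locale gam = prob_space M for M :: "'a measure" +
  fixes \<xi> :: "nat \<Rightarrow> 'a \<Rightarrow> real" and p :: real
  assumes p0: "0 < p" and p1: "p < 1"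
  and ind: "indep_vars (\<lambda>_. borel) \<xi> {1..}"
  and P1: "\<And>n. n \<ge> 1 \<Longrightarrow> prob {\<omega> \<in> space M. \<xi> n \<omega> = 1} = p"
  and Pm1: "\<And>n. n \<ge> 1 \<Longrightarrow> prob {\<omega> \<in> space M. \<xi> n \<omega> = -1} = 1 - p"
begin

lemma rv: "n \<ge> 1 \<Longrightarrow> \<xi> n \<in> borel_measurable M"
  using ind unfolding indep_vars_def by auto

lemma bet_meas: "(\<lambda>\<omega>. bet (\<lambda>k. \<xi> k \<omega>) (Suc n)) \<in> borel_measurable M"
proof (induction n)
  case 0 then show ?case by simp
next
  case (Suc n)
  have [measurable]: "\<xi> (Suc n) \<in> borel_measurable M" by (rule rv) simp
  note Suc[measurable]
  show ?case by simp measurable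
qed

lemma wealth_meas[measurable]: "(\<lambda>\<omega>. wealth x (\<lambda>k. \<xi> k \<omega>) n) \<in> borel_measurable M"
proof (induction n)
  case 0 then show ?case by simp
next
  case (Suc n)
  have [measurable]: "\<xi> (Suc n) \<in> borel_measurable M" by (rule rv) simp
  note Suc[measurable] bet_meas[measurable]
  show ?case by simp measurable
qed

lemma ev_meas: "n \<ge> 1 \<Longrightarrow> {\<omega> \<in> space M. \<xi> n \<omega> = c} \<in> sets M"
  using rv by measurable

lemma ae_pm: "n \<ge> 1 \<Longrightarrow> AE \<omega> in M. \<xi> n \<omega> \<in> {1,-1}"
proof -
  assume n: "n \<ge> 1"
  have "prob ({\<omega> \<in> space M. \<xi> n \<omega> = 1} \<union> {\<omega> \<in> space M. \<xi> n \<omega> = -1}) = p + (1 - p)"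
    using n by (subst finite_measure_Union) (auto intro!: ev_meas simp: P1 Pm1)
  hence "AE \<omega> in M. \<omega> \<in> {\<omega> \<in> space M. \<xi> n \<omega> = 1} \<union> {\<omega> \<in> space M. \<xi> n \<omega> = -1}"
    by (intro AE_prob_1) simp
  thus ?thesis by (rule AE_mp) (auto intro!: AE_I2)
qed

definition G :: "nat \<Rightarrow> real list \<Rightarrow> 'a set" where
  "G N s = (\<Inter>i\<in>{1..Suc N}. \<xi> i -` {s!(i-1)} \<inter> space M)"

lemma G_sets: "G N s \<in> sets M"
  unfolding G_def using rv by (intro sets.finite_INT) (auto intro!: measurable_sets)

lemma prob_G: "s \<in> LS (Suc N) \<Longrightarrow> prob (G N s) = prod_list (map (wt p) s)"
proof -
  assume s: "s \<in> LS (Suc N)"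
  have "prob (G N s) = (\<Prod>i\<in>{1..Suc N}. prob (\<xi> i -` {s!(i-1)} \<inter> space M))"
    unfolding G_def by (rule indep_varsD[OF ind]) auto
  also have "\<dots> = (\<Prod>i\<in>{1..Suc N}. wt p (s!(i-1)))"
  proof (rule prod.cong)
    fix i assume i: "i \<in> {1..Suc N}"
    have "s!(i-1) \<in> set s" using s i unfolding LS_def by (intro nth_mem) auto
    hence "s!(i-1) \<in> {1,-1}" using s unfolding LS_def by blast
    moreover have "\<xi> i -` {c} \<inter> space M = {\<omega> \<in> space M. \<xi> i \<omega> = c}" for c by auto
    ultimately show "prob (\<xi> i -` {s!(i-1)} \<inter> space M) = wt p (s!(i-1))"
      using i P1 Pm1 by (auto simp: wt_def)
  qed simp
  also have "\<dots> = (\<Prod>i<Suc N. wt p (s!i))"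
    unfolding image_Suc_lessThan[symmetric] by (subst prod.reindex) auto
  also have "\<dots> = prod_list (map (wt p) s)" using s by (simp add: prod_list_nth LS_def)
  finally show ?thesis .
qed

definition E :: "real \<Rightarrow> nat \<Rightarrow> 'a set" where
  "E x N = {\<omega> \<in> space M. \<exists>n\<le>N. wealth x (\<lambda>k. \<xi> k \<omega>) n \<le> 0}"

lemma E_sets: "E x N \<in> sets M"
  unfolding E_def by measurable

lemma memG: "\<omega> \<in> space M \<Longrightarrow> \<omega> \<in> G N s \<longleftrightarrow> (\<forall>i\<in>{1..Suc N}. \<xi> i \<omega> = s!(i-1))"
  unfolding G_def by auto

lemma G_iff: "length s = Suc N \<Longrightarrow>
   (\<forall>i\<in>{1..Suc N}. \<xi> i \<omega> = s!(i-1)) \<longleftrightarrow> map (\<lambda>k. \<xi> k \<omega>) [1..<1 + Suc N] = s"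
proof
  assume l: "length s = Suc N" and h: "\<forall>i\<in>{1..Suc N}. \<xi> i \<omega> = s!(i-1)"
  show "map (\<lambda>k. \<xi> k \<omega>) [1..<1 + Suc N] = s"
  proof (rule nth_equalityI)
    fix j assume "j < length (map (\<lambda>k. \<xi> k \<omega>) [1..<1 + Suc N])"
    hence j: "j < Suc N" by (simp del: upt_Suc)
    hence "map (\<lambda>k. \<xi> k \<omega>) [1..<1 + Suc N] ! j = \<xi> (1 + j) \<omega>" by (simp del: upt_Suc)
    also have "\<dots> = s ! j"
    proof -
      have "1+j \<in> {1..Suc N}" using j by simp
      hence "\<xi> (1+j) \<omega> = s!(1+j-1)" using h by blast
      thus ?thesis by simp
    qed
    finally show "map (\<lambda>k. \<xi> k \<omega>) [1..<1 + Suc N] ! j = s ! j" .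
  qed (use l in simp)
next
  assume "map (\<lambda>k. \<xi> k \<omega>) [1..<1 + Suc N] = s"
  thus "\<forall>i\<in>{1..Suc N}. \<xi> i \<omega> = s!(i-1)"
    by (auto simp del: upt_Suc)
qed

lemma prob_E: "prob (E x (Suc N)) = QN p (Suc N) x"
proof -
  define L where "L = {s\<in>LS (Suc N). ruinL x s}"
  have Lfin: "finite L" using LS_finite by (simp add: L_def)
  define U where "U = (\<Union>s\<in>L. G N s)"
  have U_sets: "U \<in> sets M" unfolding U_def using Lfin G_sets by auto
  have ae: "AE \<omega> in M. \<forall>i\<in>{1..Suc N}. \<xi> i \<omega> \<in> {1,-1}"
    by (intro AE_finite_allI ae_pm) auto
  have "AE \<omega> in M. \<omega> \<in> E x (Suc N) \<longleftrightarrow> \<omega> \<in> U"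
    using ae AE_space
  proof eventually_elim
    case (elim \<omega>)
    define v where "v = map (\<lambda>k. \<xi> k \<omega>) [1..<1 + Suc N]"
    have vL: "v \<in> LS (Suc N)"
    proof -
      have "set v \<subseteq> {1,-1}" using elim(1) by (auto simp: v_def simp del: upt_Suc)
      thus ?thesis by (simp add: LS_def v_def del: upt_Suc)
    qed
    have "\<omega> \<in> E x (Suc N) \<longleftrightarrow> ruinL x v"
      using elim(2) event_eq[of "Suc N" x "\<lambda>k. \<xi> k \<omega>"] by (simp add: E_def v_def del: upt_Suc)
    moreover have "\<omega> \<in> U \<longleftrightarrow> ruinL x v"
    proof -
      have "\<omega> \<in> G N s \<longleftrightarrow> v = s" if "s \<in> LS (Suc N)" for s
        using that memG[OF elim(2)] G_iff[of s N \<omega>] by (auto simp: LS_def v_def simp del: upt_Suc)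
      thus ?thesis using vL unfolding U_def L_def by auto
    qed
    ultimately show ?case by simp
  qed
  hence "prob (E x (Suc N)) = prob U" by (rule measure_eq_AE[OF _ E_sets U_sets])
  also have "\<dots> = (\<Sum>s\<in>L. prob (G N s))" unfolding U_def
  proof (rule measure_finite_Union[OF Lfin])
    show "G N ` L \<subseteq> sets M" using G_sets by auto
    show "disjoint_family_on (G N) L"
      unfolding disjoint_family_on_def
    proof (intro ballI impI)
      fix s s' assume s: "s \<in> L" and s': "s' \<in> L" and ne: "s \<noteq> s'"
      show "G N s \<inter> G N s' = {}"
      proof (rule ccontr)
        assume "G N s \<inter> G N s' \<noteq> {}"
        then obtain \<omega> where w: "\<omega> \<in> G N s" "\<omega> \<in> G N s'" by blast
        hence sp: "\<omega> \<in> space M" using G_sets sets.sets_into_space by blast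
        have ls: "length s = Suc N" "length s' = Suc N" using s s' by (auto simp: L_def LS_def)
        have "map (\<lambda>k. \<xi> k \<omega>) [1..<1 + Suc N] = s"
          using w(1) memG[OF sp, of N s] G_iff[OF ls(1), of \<omega>] by blast
        moreover have "map (\<lambda>k. \<xi> k \<omega>) [1..<1 + Suc N] = s'"
          using w(2) memG[OF sp, of N s'] G_iff[OF ls(2), of \<omega>] by blast
        ultimately show False using ne by simp
      qed
    qed
    show "\<And>i. i \<in> L \<Longrightarrow> emeasure M (G N i) \<noteq> \<infinity>" by (simp add: emeasure_eq_measure)
  qed
  also have "\<dots> = (\<Sum>s\<in>L. prod_list (map (wt p) s))"
    by (intro sum.cong) (auto simp: L_def prob_G)
  also have "\<dots> = (\<Sum>s\<in>LS (Suc N). prod_list (map (wt p) s) * (if ruinL x s then 1 else 0))"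
    unfolding L_def by (subst sum.inter_filter[OF LS_finite]) (auto intro!: sum.cong)
  also have "\<dots> = QN p (Suc N) x" by (rule comb)
  finally show ?thesis .
qed

lemma prm: "prm p" by unfold_locales (fact p0, fact p1)

lemma ruin_prob: "prob {\<omega> \<in> space M. \<exists>n. wealth x (\<lambda>k. \<xi> k \<omega>) n \<le> 0} = prm.Qf p x"
proof -
  have eq: "{\<omega> \<in> space M. \<exists>n. wealth x (\<lambda>k. \<xi> k \<omega>) n \<le> 0} = (\<Union>N. E x N)"
    unfolding E_def by auto
  have "(\<lambda>N. prob (E x N)) \<longlonglongrightarrow> prob (\<Union>N. E x N)"
  proof (rule finite_Lim_measure_incseq)
    show "range (E x) \<subseteq> sets M" using E_sets by auto
    show "incseq (E x)" unfolding E_def by (rule incseq_SucI) (blast intro: le_SucI)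
  qed
  hence "(\<lambda>N. prob (E x (Suc N))) \<longlonglongrightarrow> prob (\<Union>N. E x N)" by (rule LIMSEQ_Suc)
  moreover have "(\<lambda>N. prob (E x (Suc N))) \<longlonglongrightarrow> prm.Qf p x"
    unfolding prob_E using prm.Q_lim[OF prm] by (rule LIMSEQ_Suc)
  ultimately show ?thesis unfolding eq using LIMSEQ_unique by blast
qed

end

theorem theorem1p1:
  fixes M :: "'a measure" and \<xi> :: "nat \<Rightarrow> 'a \<Rightarrow> real" and p x :: real
  assumes "prob_space M"
    and "p > 0" and "p < 1" and "x \<ge> 1"
    and "prob_space.indep_vars M (\<lambda>_. borel) \<xi> {1..}"
    and "\<And>n. n \<ge> 1 \<Longrightarrow> measure M {\<omega> \<in> space M. \<xi> n \<omega> = 1} = p"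
    and "\<And>n. n \<ge> 1 \<Longrightarrow> measure M {\<omega> \<in> space M. \<xi> n \<omega> = -1} = 1 - p"
  shows "measure M {\<omega> \<in> space M. \<exists>n. wealth x (\<lambda>k. \<xi> k \<omega>) n \<le> 0} < 1
           \<longleftrightarrow> (x > 2 \<and> p < 1/2)"
proof -
  have "gam M \<xi> p"
  proof (rule gam.intro)
    show "prob_space M" by (rule assms(1))
    show "gam_axioms M \<xi> p"
      by (rule gam_axioms.intro) (fact assms(2), fact assms(3), fact assms(5), fact assms(6), fact assms(7))
  qed
  then interpret gam M \<xi> p .
  have pr: "prm p" by (rule prm)
  note R = ruin_prob[of x]
  show ?thesis unfolding R
  proof (cases "x > 2 \<and> p < 1/2")
    case True then show "prm.Qf p x < 1 \<longleftrightarrow> (x > 2 \<and> p < 1/2)" using prm.Q_small[OF pr] by simp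
  next
    case False
    hence "prm.Qf p x = 1"
    proof (cases "x \<le> 2")
      case True then show ?thesis by (rule prm.Q_low[OF pr])
    next
      case F: False
      with False have "1/2 \<le> p" by simp
      thus ?thesis by (rule prm.Q_half[OF pr])
    qed
    thus "prm.Qf p x < 1 \<longleftrightarrow> (x > 2 \<and> p < 1/2)" using False by simp
  qed
qed

end
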